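(* In the quantum switch model of the context (with $W=\infty$), suppose the entanglement swapping success probability is $q=1$ and $(\lambda_{ij}+\epsilon)_{i,j\in\mathcal K}\in\Lambda$ for some $\epsilon>0$. Then the quantum switch is stable under any on-demand protocol $\pi_{\mathrm{od}}$.
   Context: Quantum switch model. There are $K$ end nodes $\mathcal K=\{1,\dots,K\}$ and a switch (node $0$); time is slotted, $t=0,1,2,\dots$; pair-indexed quantities are symmetric in $(i,j)$. In slot $t$: (i) $C_{0i}(t)\in\{0,1\}$ EPR pairs are generated between the switch and node $i$, where $\{C_{0i}(t)\}_{t\ge0}$ are mutually independent Bernoulli processes (i.i.d. in $t$) with mean $p_i$. (ii) The switch chooses nonnegative integers $F_{ij}(t)=F_{ji}(t)$ (entanglement swaps for pair $(i,j)$, each consuming one stored switch–$i$ and one stored switch–$j$ pair) with $\sum_iF_{ij}(t)\le E_{0j}(t)$; no limit on swaps per slot ($W=\infty$); each swap succeeds independently with probability $q$; $R_{ij}(t)$ is the number of successes. (iii) $A_{ij}(t)\in\mathbb N$ new requests for pair $(i,j)$ arrive. Dynamics: $U_{ij}(t+1)=[U_{ij}(t)-E_{ij}(t)-R_{ij}(t)]^++A_{ij}(t)$, $E_{ij}(t+1)=[E_{ij}(t)+R_{ij}(t)-U_{ij}(t)]^+$, $E_{0i}(t+1)=E_{0i}(t)-\sum_jF_{ij}(t)+C_{0i}(t)$, with zero initial values; $U_{ij}$ = pending requests, $E_{ij}$ = stored $i$–$j$ pairs, $E_{0i}$ = stored switch–$i$ pairs; memory unlimited, no decoherence. Requests: $\{A_{ij}(t)\}_t$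 mutually independent across pairs, each stationary ergodic with rate $\lambda_{ij}$ (so $\frac1t\sum_{\tau<t}A_{ij}(\tau)\to\lambda_{ij}$ a.s.), and $\mathbb E[A_{ij}(t)^2\mid H(t)=h]\le A_{\max}^2$ for every $t,i,j$ and realization $h$ of the history $H(t)=(E_{ij}(\tau),U_{ij}(\tau),A_{ij}(\tau),R_{ij}(\tau),C_{0i}(\tau))_{\tau=0}^{t-1}$. Stability: for all $i,j$, $\limsup_{t\to\infty}\frac1t\sum_{\tau=0}^{t-1}\mathbb P[U_{ij}(\tau)>V]\to0$ as $V\to\infty$. $\Lambda$ is the set of nonnegative matrices $(\lambda_{ij})$ for which there exist nonnegative $f_{ij}=f_{ji}$ with $\sum_if_{ij}\le p_j$ for all $j$ and $\lambda_{ij}\le qf_{ij}$ for all $i,j$. On-demand protocols: a protocol is on-demand if in every slot $t$ its choices $F_{ij}=F_{ij}(t)$ satisfy $\sum_{i\in\mathcal K}F_{ij}\le E_{0j}(t)$ for all $j$; $F_{ij}\le U_{ij}(t)$ for all $i,j$; $F_{ij}=F_{ji}\in\mathbb N$; and $\big(E_{0i}(t)-\sum_kF_{ik}\big)\big(E_{0j}(t)-\sum_kF_{kj}\big)\big(U_{ij}(t)-F_{ij}\big)=0$ for all $i,j$ (any choice satisfying these may be used). *)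

theory Defs
  imports "HOL-Probability.Probability"
begin

definition nodes :: "nat \<Rightarrow> nat set" where
  "nodes K = {1..K}"

text \<open>Unordered pairs of distinct end nodes, represented by (i,j) with i < j.\<close>
definition node_pairs :: "nat \<Rightarrow> (nat \<times> nat) set" where
  "node_pairs K = {(i,j). i \<in> nodes K \<and> j \<in> nodes K \<and> i < j}"

text \<open>Inputs: arrivals a t i j, generations c t i, swaps f t i j.
  Since q = 1 every swap succeeds, so R_ij(t) = F_ij(t). Natural-number subtraction realises the positive part.\<close>
primrec qstate ::
  "nat \<Rightarrow> (nat \<Rightarrow> nat \<Rightarrow> nat \<Rightarrow> nat) \<Rightarrow> (nat \<Rightarrow> nat \<Rightarrow> nat) \<Rightarrow> (nat \<Rightarrow> nat \<Rightarrow> nat \<Rightarrow> nat)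
   \<Rightarrow> nat \<Rightarrow> (nat \<Rightarrow> nat \<Rightarrow> nat) \<times> (nat \<Rightarrow> nat \<Rightarrow> nat) \<times> (nat \<Rightarrow> nat)" where
  "qstate K a c f 0 = ((\<lambda>i j. 0), (\<lambda>i j. 0), (\<lambda>i. 0))"
| "qstate K a c f (Suc t) =
     (case qstate K a c f t of (U, E, E0) \<Rightarrow>
       ((\<lambda>i j. (U i j - E i j - f t i j) + a t i j),
        (\<lambda>i j. (E i j + f t i j) - U i j),
        (\<lambda>i. E0 i - (\<Sum>j\<in>nodes K - {i}. f t i j) + c t i)))"

definition Uq where "Uq K a c f t = fst (qstate K a c f t)"
definition Eq where "Eq K a c f t = fst (snd (qstate K a c f t))"
definition E0q where "E0q K a c f t = snd (snd (qstate K a c f t))"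

definition on_demand :: "nat \<Rightarrow> (nat \<Rightarrow> nat \<Rightarrow> nat) \<Rightarrow> (nat \<Rightarrow> nat) \<Rightarrow> (nat \<Rightarrow> nat \<Rightarrow> nat) \<Rightarrow> bool" where
  "on_demand K U E0 Fm \<longleftrightarrow>
     (\<forall>j\<in>nodes K. (\<Sum>i\<in>nodes K - {j}. Fm i j) \<le> E0 j) \<and>
     (\<forall>i\<in>nodes K. \<forall>j\<in>nodes K. i \<noteq> j \<longrightarrow>
        Fm i j \<le> U i j \<and> Fm i j = Fm j i \<and>
        (E0 i - (\<Sum>k\<in>nodes K - {i}. Fm i k)) * (E0 j - (\<Sum>k\<in>nodes K - {j}. Fm k j))
          * (U i j - Fm i j) = 0)"

definition capacity_region :: "nat \<Rightarrow> (nat \<Rightarrow> real) \<Rightarrow> real \<Rightarrow> (nat \<Rightarrow> nat \<Rightarrow> real) \<Rightarrow> bool" where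
  "capacity_region K p q lam \<longleftrightarrow>
     (\<forall>i\<in>nodes K. \<forall>j\<in>nodes K. i \<noteq> j \<longrightarrow> lam i j \<ge> 0) \<and>
     (\<exists>f :: nat \<Rightarrow> nat \<Rightarrow> real.
        (\<forall>i j. f i j = f j i \<and> f i j \<ge> 0) \<and>
        (\<forall>j\<in>nodes K. (\<Sum>i\<in>nodes K - {j}. f i j) \<le> p j) \<and>
        (\<forall>i\<in>nodes K. \<forall>j\<in>nodes K. i \<noteq> j \<longrightarrow> lam i j \<le> q * f i j))"

definition seq_space :: "(nat \<Rightarrow> nat) measure" where
  "seq_space = Pi\<^sub>M UNIV (\<lambda>_. count_space UNIV)"

definition proc_law :: "'a measure \<Rightarrow> (nat \<Rightarrow> 'a \<Rightarrow> nat) \<Rightarrow> (nat \<Rightarrow> nat) measure" where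
  "proc_law M X = distr M seq_space (\<lambda>\<omega> t. X t \<omega>)"

definition stationary_proc :: "'a measure \<Rightarrow> (nat \<Rightarrow> 'a \<Rightarrow> nat) \<Rightarrow> bool" where
  "stationary_proc M X \<longleftrightarrow> proc_law M (\<lambda>t. X (Suc t)) = proc_law M X"

definition ergodic_proc :: "'a measure \<Rightarrow> (nat \<Rightarrow> 'a \<Rightarrow> nat) \<Rightarrow> bool" where
  "ergodic_proc M X \<longleftrightarrow>
     (\<forall>S\<in>sets seq_space. (\<lambda>x t. x (Suc t)) -` S \<inter> space seq_space = S \<longrightarrow>
        emeasure (proc_law M X) S = 0 \<or> emeasure (proc_law M X) S = 1)"

text \<open>History sigma-algebra H(t): generated by arrivals and generations before slot t
  (E, U, R are functions of these, given the history-adapted protocol and q = 1).\<close>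
definition hist_alg ::
  "'a measure \<Rightarrow> nat \<Rightarrow> (nat \<Rightarrow> nat \<Rightarrow> nat \<Rightarrow> 'a \<Rightarrow> nat) \<Rightarrow> (nat \<Rightarrow> nat \<Rightarrow> 'a \<Rightarrow> nat) \<Rightarrow> nat \<Rightarrow> 'a measure" where
  "hist_alg M K A C t = sigma (space M)
     ({A \<tau> i j -` B \<inter> space M | \<tau> i j B. \<tau> < t \<and> i \<in> nodes K \<and> j \<in> nodes K}
      \<union> {C \<tau> i -` B \<inter> space M | \<tau> i B. \<tau> < t \<and> i \<in> nodes K})"

definition all_procs ::
  "(nat \<Rightarrow> nat \<Rightarrow> nat \<Rightarrow> 'a \<Rightarrow> nat) \<Rightarrow> (nat \<Rightarrow> nat \<Rightarrow> 'a \<Rightarrow> nat) \<Rightarrow> (nat \<times> nat) + nat \<Rightarrow> 'a \<Rightarrow> nat \<Rightarrow> nat" where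
  "all_procs A C x \<omega> t = (case x of Inl (i, j) \<Rightarrow> A t i j \<omega> | Inr i \<Rightarrow> C t i \<omega>)"

definition switch_stable :: "'a measure \<Rightarrow> nat \<Rightarrow> (nat \<Rightarrow> nat \<Rightarrow> nat \<Rightarrow> 'a \<Rightarrow> nat) \<Rightarrow> bool" where
  "switch_stable M K U \<longleftrightarrow>
     (\<forall>i\<in>nodes K. \<forall>j\<in>nodes K. i \<noteq> j \<longrightarrow>
        ((\<lambda>V::real. limsup (\<lambda>t::nat. ereal ((\<Sum>\<tau><t. measure M {\<omega>\<in>space M. real (U \<tau> i j \<omega>) > V}) / real t)))
          \<longlongrightarrow> 0) at_top)"

end

theory Submission
  imports Defs
begin


lemma qs_simps:
  "Uq K a c f 0 = (\<lambda>i j. 0)" "Eq K a c f 0 = (\<lambda>i j. 0)" "E0q K a c f 0 = (\<lambda>i. 0)"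
  "Uq K a c f (Suc t) = (\<lambda>i j. (Uq K a c f t i j - Eq K a c f t i j - f t i j) + a t i j)"
  "Eq K a c f (Suc t) = (\<lambda>i j. (Eq K a c f t i j + f t i j) - Uq K a c f t i j)"
  "E0q K a c f (Suc t) = (\<lambda>i. E0q K a c f t i - (\<Sum>j\<in>nodes K - {i}. f t i j) + c t i)"
  by (simp_all add: Uq_def Eq_def E0q_def split: prod.split)

lemma od_facts:
  assumes "on_demand K U E0 Fm" "i \<in> nodes K"
  shows "(\<Sum>k\<in>nodes K - {i}. Fm i k) \<le> E0 i"
proof -
  have "(\<Sum>k\<in>nodes K - {i}. Fm i k) = (\<Sum>k\<in>nodes K - {i}. Fm k i)"
    using assms unfolding on_demand_def by (intro sum.cong) auto
  also have "\<dots> \<le> E0 i" using assms unfolding on_demand_def by auto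
  finally show ?thesis .
qed

lemma od_inv:
  assumes od: "\<And>t. on_demand K (Uq K a c f t) (E0q K a c f t) (f t)"
  shows "(\<forall>i\<in>nodes K. \<forall>k\<in>nodes K. i \<noteq> k \<longrightarrow> Eq K a c f t i k = 0 \<and>
            int (Uq K a c f t i k) = (\<Sum>\<tau><t. int (a \<tau> i k) - int (f \<tau> i k))) \<and>
         (\<forall>i\<in>nodes K. int (E0q K a c f t i) = (\<Sum>\<tau><t. int (c \<tau> i) - (\<Sum>k\<in>nodes K - {i}. int (f \<tau> i k))))"
proof (induction t)
  case 0
  then show ?case by (simp add: qs_simps)
next
  case (Suc t)
  have le: "f t i k \<le> Uq K a c f t i k" if "i \<in> nodes K" "k \<in> nodes K" "i \<noteq> k" for i k
    using od[of t] that unfolding on_demand_def by auto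
  have le2: "(\<Sum>k\<in>nodes K - {i}. f t i k) \<le> E0q K a c f t i" if "i \<in> nodes K" for i
    using od_facts[OF od that] .
  show ?case
  proof (intro conjI ballI impI)
    fix i k assume ik: "i \<in> nodes K" "k \<in> nodes K" "i \<noteq> k"
    from Suc ik have e: "Eq K a c f t i k = 0" by auto
    from Suc ik have u: "int (Uq K a c f t i k) = (\<Sum>\<tau><t. int (a \<tau> i k) - int (f \<tau> i k))" by auto
    show "Eq K a c f (Suc t) i k = 0" using e le[OF ik] by (simp add: qs_simps)
    show "int (Uq K a c f (Suc t) i k) = (\<Sum>\<tau><Suc t. int (a \<tau> i k) - int (f \<tau> i k))"
      using e le[OF ik] u by (simp add: qs_simps of_nat_diff)
  next
    fix i assume i: "i \<in> nodes K"
    from Suc i have u: "int (E0q K a c f t i) = (\<Sum>\<tau><t. int (c \<tau> i) - (\<Sum>k\<in>nodes K - {i}. int (f \<tau> i k)))" by auto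
    show "int (E0q K a c f (Suc t) i) = (\<Sum>\<tau><Suc t. int (c \<tau> i) - (\<Sum>k\<in>nodes K - {i}. int (f \<tau> i k)))"
      using le2[OF i] u by (simp add: qs_simps of_nat_diff flip: of_nat_sum)
  qed
qed

lemma leftover_pos:
  assumes od: "\<And>t. on_demand K (Uq K a c f t) (E0q K a c f t) (f t)"
    and i: "i \<in> nodes K"
    and hi: "(\<Sum>\<tau><t. \<Sum>k\<in>nodes K - {i}. a \<tau> i k) \<le> (\<Sum>\<tau><t. c \<tau> i)"
    and ex: "k0 \<in> nodes K - {i}" "f t i k0 < Uq K a c f t i k0"
  shows "(\<Sum>k\<in>nodes K - {i}. f t i k) < E0q K a c f t i"
proof -
  note inv = od_inv[OF od, of t]
  have le: "f t i k \<le> Uq K a c f t i k" if "k \<in> nodes K - {i}" for k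
    using od[of t] that i unfolding on_demand_def by auto
  have fin: "finite (nodes K - {i})" by (simp add: nodes_def)
  have "(\<Sum>k\<in>nodes K - {i}. f t i k) < (\<Sum>k\<in>nodes K - {i}. Uq K a c f t i k)"
    using le ex fin by (intro sum_strict_mono_ex1) auto
  hence "int (\<Sum>k\<in>nodes K - {i}. f t i k) < (\<Sum>k\<in>nodes K - {i}. int (Uq K a c f t i k))"
    by (simp flip: of_nat_sum)
  also have "\<dots> = (\<Sum>k\<in>nodes K - {i}. \<Sum>\<tau><t. int (a \<tau> i k) - int (f \<tau> i k))"
    using inv i by (intro sum.cong) auto
  also have "\<dots> = (\<Sum>\<tau><t. \<Sum>k\<in>nodes K - {i}. int (a \<tau> i k)) - (\<Sum>\<tau><t. \<Sum>k\<in>nodes K - {i}. int (f \<tau> i k))"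
    by (subst sum.swap) (simp add: sum_subtractf)
  also have "\<dots> \<le> (\<Sum>\<tau><t. int (c \<tau> i)) - (\<Sum>\<tau><t. \<Sum>k\<in>nodes K - {i}. int (f \<tau> i k))"
    using hi by (simp flip: of_nat_sum)
  also have "\<dots> = int (E0q K a c f t i)"
    using inv i by (simp add: sum_subtractf)
  finally show ?thesis by linarith
qed

lemma key_det:
  assumes od: "\<And>t. on_demand K (Uq K a c f t) (E0q K a c f t) (f t)"
    and asym: "\<And>t i j. a t i j = a t j i"
    and ij: "i \<in> nodes K" "j \<in> nodes K" "i \<noteq> j"
    and hi: "(\<Sum>\<tau><t. \<Sum>k\<in>nodes K - {i}. a \<tau> i k) \<le> (\<Sum>\<tau><t. c \<tau> i)"
    and hj: "(\<Sum>\<tau><t. \<Sum>k\<in>nodes K - {j}. a \<tau> j k) \<le> (\<Sum>\<tau><t. c \<tau> j)"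
  shows "Uq K a c f (Suc t) i j = a t i j"
proof (rule ccontr)
  assume ne: "Uq K a c f (Suc t) i j \<noteq> a t i j"
  note inv = od_inv[OF od, of t]
  have fsym: "f \<tau> i j = f \<tau> j i" for \<tau>
    using od[of \<tau>] ij unfolding on_demand_def by auto
  have le: "f t i j \<le> Uq K a c f t i j"
    using od[of t] ij unfolding on_demand_def by auto
  have e: "Eq K a c f t i j = 0" using inv ij by auto
  have lt: "f t i j < Uq K a c f t i j"
    using ne le e by (auto simp: qs_simps)
  have "int (Uq K a c f t j i) = int (Uq K a c f t i j)"
    using inv ij by (simp add: asym fsym)
  hence lt2: "f t j i < Uq K a c f t j i" using lt fsym by simp
  have p1: "(\<Sum>k\<in>nodes K - {i}. f t i k) < E0q K a c f t i"
    using leftover_pos[OF od ij(1) hi, of j] ij lt by auto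
  have p2: "(\<Sum>k\<in>nodes K - {j}. f t j k) < E0q K a c f t j"
    using leftover_pos[OF od ij(2) hj, of i] ij lt2 by auto
  have "(\<Sum>k\<in>nodes K - {j}. f t k j) = (\<Sum>k\<in>nodes K - {j}. f t j k)"
    using od[of t] ij unfolding on_demand_def by (intro sum.cong) auto
  with p2 have p2': "(\<Sum>k\<in>nodes K - {j}. f t k j) < E0q K a c f t j" by simp
  let ?X = "E0q K a c f t i - (\<Sum>k\<in>nodes K - {i}. f t i k)"
  let ?Y = "E0q K a c f t j - (\<Sum>k\<in>nodes K - {j}. f t k j)"
  let ?Z = "Uq K a c f t i j - f t i j"
  have z: "?X * ?Y * ?Z = 0"
    using od[of t] ij unfolding on_demand_def by blast
  have "0 < ?X * ?Y * ?Z"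
    using p1 p2' lt by (intro mult_pos_pos) auto
  with z show False by linarith
qed



lemma ae_eventually_measure:
  assumes P: "prob_space M"
    and ae: "AE \<omega> in M. eventually (\<lambda>t. Q t \<omega>) sequentially"
    and meas: "\<And>t. {\<omega>\<in>space M. \<not> Q t \<omega>} \<in> sets M"
  shows "(\<lambda>t. measure M {\<omega>\<in>space M. \<not> Q t \<omega>}) \<longlonglongrightarrow> 0"
proof -
  interpret prob_space M by (rule P)
  let ?s = "\<lambda>t. indicator {\<omega>\<in>space M. \<not> Q t \<omega>} :: 'a \<Rightarrow> real"
  have "(\<lambda>t. integral\<^sup>L M (?s t)) \<longlonglongrightarrow> integral\<^sup>L M (\<lambda>_. 0::real)"
  proof (rule integral_dominated_convergence[where w="\<lambda>_. 1"])
    show "AE x in M. (\<lambda>i. ?s i x) \<longlonglongrightarrow> 0"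
      using ae
    proof eventually_elim
      case (elim x)
      then show ?case
        by (intro tendsto_eventually) (auto elim!: eventually_mono simp: indicator_def)
    qed
      show "\<And>i. ?s i \<in> borel_measurable M" using meas by (intro borel_measurable_indicator)
  qed (auto simp: indicator_def)
  then show ?thesis using meas by (simp add: Int_absorb2 sets.sets_into_space)
qed

lemma sum_sq_bound:
  fixes Y :: "nat \<Rightarrow> 'a \<Rightarrow> real"
  assumes P: "prob_space M"
    and meas: "\<And>t. Y t \<in> borel_measurable M"
    and bnd: "\<And>t \<omega>. \<omega> \<in> space M \<Longrightarrow> \<bar>Y t \<omega>\<bar> \<le> 1"
    and mean: "\<And>t. integral\<^sup>L M (Y t) = 0"
    and ind: "prob_space.indep_vars M (\<lambda>_. borel) Y UNIV"
  shows "integral\<^sup>L M (\<lambda>\<omega>. (\<Sum>\<tau><t. Y \<tau> \<omega>)\<^sup>2) \<le> real t"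
proof -
  interpret prob_space M by (rule P)
  have int: "integrable M (Y s)" for s
    using bnd by (intro integrable_const_bound[where B=1]) (auto simp: meas)
  have int2: "integrable M (\<lambda>\<omega>. Y s \<omega> * Y u \<omega>)" for s u
  proof (intro integrable_const_bound[where B=1])
    show "AE x in M. norm (Y s x * Y u x) \<le> 1"
      using bnd by (auto simp: abs_mult intro!: mult_le_one)
    show "(\<lambda>\<omega>. Y s \<omega> * Y u \<omega>) \<in> borel_measurable M"
      using meas by (intro borel_measurable_times)
  qed
  have g: "integral\<^sup>L M (\<lambda>\<omega>. Y s \<omega> * Y u \<omega>) = (if u = s then integral\<^sup>L M (\<lambda>\<omega>. Y s \<omega> * Y s \<omega>) else 0)" for s u
  proof (cases "u = s")
    case False
    have "indep_vars (\<lambda>_. borel) Y (insert s {u})"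
      by (rule indep_vars_subset[OF ind]) auto
    from indep_vars_sum[OF _ _ this] False
    have "indep_var borel (Y s) borel (Y u)" by simp
    from indep_var_lebesgue_integral[OF this int int] False show ?thesis by (simp add: mean)
  qed simp
  have "integral\<^sup>L M (\<lambda>\<omega>. (\<Sum>\<tau><t. Y \<tau> \<omega>)\<^sup>2) = integral\<^sup>L M (\<lambda>\<omega>. \<Sum>s<t. \<Sum>u<t. Y s \<omega> * Y u \<omega>)"
    by (simp add: power2_eq_square sum_product)
  also have "\<dots> = (\<Sum>s<t. \<Sum>u<t. integral\<^sup>L M (\<lambda>\<omega>. Y s \<omega> * Y u \<omega>))"
    using int2 by (simp add: integral_sum integrable_sum)
  also have "\<dots> = (\<Sum>s<t. integral\<^sup>L M (\<lambda>\<omega>. Y s \<omega> * Y s \<omega>))"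
  proof (intro sum.cong refl)
    fix s assume "s \<in> {..<t}"
    have "(\<Sum>u<t. integral\<^sup>L M (\<lambda>\<omega>. Y s \<omega> * Y u \<omega>)) =
          (\<Sum>u<t. if u = s then integral\<^sup>L M (\<lambda>\<omega>. Y s \<omega> * Y s \<omega>) else 0)"
      by (rule sum.cong[OF refl], rule g)
    also have "\<dots> = integral\<^sup>L M (\<lambda>\<omega>. Y s \<omega> * Y s \<omega>)"
      using \<open>s \<in> {..<t}\<close> by (simp add: sum.delta)
    finally show "(\<Sum>u<t. integral\<^sup>L M (\<lambda>\<omega>. Y s \<omega> * Y u \<omega>)) = integral\<^sup>L M (\<lambda>\<omega>. Y s \<omega> * Y s \<omega>)" .
  qed
  also have "\<dots> \<le> (\<Sum>s<t. 1)"
  proof (intro sum_mono)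
    fix s
    have "integral\<^sup>L M (\<lambda>\<omega>. Y s \<omega> * Y s \<omega>) \<le> integral\<^sup>L M (\<lambda>_. 1::real)"
    proof (rule integral_mono[OF int2])
      fix \<omega> assume w: "\<omega> \<in> space M"
      have "\<bar>Y s \<omega>\<bar> * \<bar>Y s \<omega>\<bar> \<le> 1 * 1"
        by (rule mult_mono) (use bnd[OF w] in auto)
      then show "Y s \<omega> * Y s \<omega> \<le> 1" by (simp add: abs_mult_self_eq)
    qed simp
    then show "integral\<^sup>L M (\<lambda>\<omega>. Y s \<omega> * Y s \<omega>) \<le> 1" by (simp add: prob_space)
  qed
  finally show ?thesis by simp
qed



lemma avg_limsup:
  fixes g h :: "nat \<Rightarrow> real" and c :: real
  assumes g0: "\<And>\<tau>. 0 \<le> g \<tau>" and g1: "g 0 \<le> 1"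
    and gs: "\<And>\<tau>. g (Suc \<tau>) \<le> c + h \<tau>"
    and h0: "\<And>\<tau>. 0 \<le> h \<tau>" and h2: "\<And>\<tau>. h \<tau> \<le> 2"
    and hlim: "h \<longlonglongrightarrow> 0" and c0: "0 \<le> c"
  shows "limsup (\<lambda>t. ereal ((\<Sum>\<tau><t. g \<tau>) / real t)) \<le> ereal c"
proof (rule ereal_le_epsilon2)
  fix e :: real assume e: "0 < e"
  have "eventually (\<lambda>t. dist (h t) 0 < e/3) sequentially"
    using hlim e by (intro tendstoD) auto
  then obtain T where T: "\<And>t. t \<ge> T \<Longrightarrow> h t \<le> e/3"
    unfolding eventually_sequentially dist_real_def by (metis abs_less_iff diff_zero less_eq_real_def)
  have c1: "(\<Sum>\<tau><t. h \<tau>) \<le> 2 * real (min t T) + (e/3) * real t" for t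
  proof (induction t)
    case (Suc t)
    show ?case
    proof (cases "t < T")
      case True
      then have "real (min (Suc t) T) = real (min t T) + 1" by simp
      with Suc h2[of t] e show ?thesis by (simp add: field_simps)
    next
      case False
      then have "real (min (Suc t) T) = real (min t T)" by simp
      with Suc T[of t] False e show ?thesis by (simp add: field_simps)
    qed
  qed simp
  have c2: "(\<Sum>\<tau><Suc t. g \<tau>) \<le> 1 + real t * c + (\<Sum>\<tau><t. h \<tau>)" for t
  proof (induction t)
    case 0 then show ?case using g1 by simp
  next
    case (Suc t)
    have "(\<Sum>\<tau><Suc (Suc t). g \<tau>) = (\<Sum>\<tau><Suc t. g \<tau>) + g (Suc t)" by simp
    also have "\<dots> \<le> 1 + real t * c + (\<Sum>\<tau><t. h \<tau>) + (c + h t)" using Suc gs[of t] by linarith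
    also have "\<dots> = 1 + real (Suc t) * c + (\<Sum>\<tau><Suc t. h \<tau>)" by (simp add: algebra_simps)
    finally show ?case .
  qed
  have ev: "eventually (\<lambda>t. (1 + 2 * real T) / real t < e/3) sequentially"
    using lim_const_over_n[of "1 + 2 * real T"] e
    by (auto dest!: order_tendstoD(2)[where a="e/3"])
  have "eventually (\<lambda>t. ereal ((\<Sum>\<tau><t. g \<tau>) / real t) \<le> ereal c + ereal e) sequentially"
    using ev eventually_gt_at_top[of 0]
  proof eventually_elim
    case (elim t)
    then obtain m where m: "t = Suc m" by (cases t) auto
    have "(\<Sum>\<tau><t. g \<tau>) \<le> 1 + real m * c + (\<Sum>\<tau><m. h \<tau>)" using c2[of m] m by simp
    also have "\<dots> \<le> 1 + real t * c + (2 * real T + (e/3) * real t)"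
    proof -
      have "real (min m T) \<le> real T" by simp
      moreover have "real m * c \<le> real t * c" using m c0 by (intro mult_right_mono) auto
      moreover have "(e/3) * real m \<le> (e/3) * real t" using m e by (intro mult_left_mono) auto
      ultimately show ?thesis using c1[of m] by linarith
    qed
    finally have s: "(\<Sum>\<tau><t. g \<tau>) \<le> (1 + 2 * real T) + real t * (c + e/3)" by (simp add: algebra_simps)
    have tp: "0 < real t" using elim by simp
    have "(\<Sum>\<tau><t. g \<tau>) / real t \<le> ((1 + 2 * real T) + real t * (c + e/3)) / real t"
      using s tp by (intro divide_right_mono) auto
    also have "\<dots> = (1 + 2 * real T) / real t + (c + e/3)" using tp by (simp add: field_simps)
    also have "\<dots> \<le> c + e" using elim(1) e by linarith
    finally show ?case by simp
  qed
  then show "limsup (\<lambda>t. ereal ((\<Sum>\<tau><t. g \<tau>) / real t)) \<le> ereal c + ereal e"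
    by (intro Limsup_bounded) auto
qed



lemma cond_bound:
  assumes P: "prob_space M" and sub: "subalgebra M F" and int: "integrable M g"
    and ae: "AE \<omega> in M. real_cond_exp M F g \<omega> \<le> B"
  shows "integral\<^sup>L M g \<le> B"
proof -
  interpret prob_space M by (rule P)
  interpret finite_measure_subalgebra M F
    by unfold_locales (rule sub)
  have "integral\<^sup>L M g = integral\<^sup>L M (real_cond_exp M F g)"
    using real_cond_exp_int(2)[OF int] by simp
  also have "\<dots> \<le> integral\<^sup>L M (\<lambda>_. B)"
    using ae real_cond_exp_int(1)[OF int] by (intro integral_mono_AE) auto
  also have "\<dots> = B" by (simp add: prob_space)
  finally show ?thesis .
qed

lemma hist_sub:
  assumes Am: "\<And>t i j. A t i j \<in> measurable M (count_space UNIV)"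
    and Cm: "\<And>t i. C t i \<in> measurable M (count_space UNIV)"
  shows "subalgebra M (hist_alg M K A C t)"
proof -
  let ?G = "{A \<tau> i j -` B \<inter> space M | \<tau> i j B. \<tau> < t \<and> i \<in> nodes K \<and> j \<in> nodes K}
      \<union> {C \<tau> i -` B \<inter> space M | \<tau> i B. \<tau> < t \<and> i \<in> nodes K}"
  have G: "?G \<subseteq> sets M"
    using measurable_sets[OF Am] measurable_sets[OF Cm] by auto
  then have Gp: "?G \<subseteq> Pow (space M)" using sets.sets_into_space by blast
  show ?thesis unfolding subalgebra_def hist_alg_def
    using G Gp by (simp add: sets_measure_of space_measure_of_conv sets.sigma_sets_subset)
qed

lemma measure_mono_any:
  assumes "finite_measure M" "S \<subseteq> T" "T \<in> sets M"
  shows "measure M S \<le> measure M T"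
proof (cases "S \<in> sets M")
  case True
  then show ?thesis using assms by (intro finite_measure.finite_measure_mono) auto
next
  case False
  then show ?thesis by (simp add: measure_notin_sets)
qed



theorem theorem5:
  fixes M :: "'a measure" and K :: nat
    and p :: "nat \<Rightarrow> real" and lam :: "nat \<Rightarrow> nat \<Rightarrow> real" and Amax :: real
    and C :: "nat \<Rightarrow> nat \<Rightarrow> 'a \<Rightarrow> nat"
    and A :: "nat \<Rightarrow> nat \<Rightarrow> nat \<Rightarrow> 'a \<Rightarrow> nat"
    and F :: "nat \<Rightarrow> nat \<Rightarrow> nat \<Rightarrow> 'a \<Rightarrow> nat"
  assumes P: "prob_space M"
    (* switch-node link generation: independent Bernoulli(p_i) processes, i.i.d. in time *)
    and C_meas: "\<And>t i. C t i \<in> measurable M (count_space UNIV)"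
    and C_01: "\<And>t i \<omega>. \<omega> \<in> space M \<Longrightarrow> C t i \<omega> \<le> 1"
    and C_mean: "\<And>t i. i \<in> nodes K \<Longrightarrow> measure M {\<omega>\<in>space M. C t i \<omega> = 1} = p i"
    and C_iid: "\<And>i. i \<in> nodes K \<Longrightarrow>
                  prob_space.indep_vars M (\<lambda>_. count_space UNIV) (\<lambda>t. C t i) UNIV"
    (* requests *)
    and A_meas: "\<And>t i j. A t i j \<in> measurable M (count_space UNIV)"
    and A_sym: "\<And>t i j \<omega>. A t i j \<omega> = A t j i \<omega>"
    and A_stat: "\<And>i j. (i, j) \<in> node_pairs K \<Longrightarrow> stationary_proc M (\<lambda>t. A t i j)"
    and A_erg: "\<And>i j. (i, j) \<in> node_pairs K \<Longrightarrow> ergodic_proc M (\<lambda>t. A t i j)"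
    and A_rate: "\<And>i j. i \<in> nodes K \<Longrightarrow> j \<in> nodes K \<Longrightarrow> i \<noteq> j \<Longrightarrow>
                   AE \<omega> in M. (\<lambda>t. (\<Sum>\<tau><t. real (A \<tau> i j \<omega>)) / real t) \<longlonglongrightarrow> lam i j"
    and A_int: "\<And>t i j. integrable M (\<lambda>\<omega>. (real (A t i j \<omega>))\<^sup>2)"
    and A_mom: "\<And>t i j. i \<in> nodes K \<Longrightarrow> j \<in> nodes K \<Longrightarrow> i \<noteq> j \<Longrightarrow>
                  AE \<omega> in M. real_cond_exp M (hist_alg M K A C t) (\<lambda>\<omega>. (real (A t i j \<omega>))\<^sup>2) \<omega> \<le> Amax\<^sup>2"
    (* mutual independence of the request processes (per pair) and the generation processes *)
    and indep: "prob_space.indep_vars M (\<lambda>_. seq_space) (all_procs A C)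
                  (Inl ` node_pairs K \<union> Inr ` nodes K)"
    (* capacity condition with slack epsilon, swap success probability q = 1 *)
    and slack: "\<exists>\<epsilon>>0. capacity_region K p 1 (\<lambda>i j. lam i j + \<epsilon>)"
    (* an arbitrary on-demand protocol, choosing swaps based on the history *)
    and F_adapted: "\<And>t i j. F t i j \<in> measurable (hist_alg M K A C t) (count_space UNIV)"
    and F_od: "\<And>t \<omega>. \<omega> \<in> space M \<Longrightarrow>
                 on_demand K
                   (Uq K (\<lambda>t i j. A t i j \<omega>) (\<lambda>t i. C t i \<omega>) (\<lambda>t i j. F t i j \<omega>) t)
                   (E0q K (\<lambda>t i j. A t i j \<omega>) (\<lambda>t i. C t i \<omega>) (\<lambda>t i j. F t i j \<omega>) t)
                   (\<lambda>i j. F t i j \<omega>)"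
  shows "switch_stable M K
           (\<lambda>t i j \<omega>. Uq K (\<lambda>t i j. A t i j \<omega>) (\<lambda>t i. C t i \<omega>) (\<lambda>t i j. F t i j \<omega>) t i j)"
proof -
  interpret prob_space M by (rule P)
  from slack obtain \<epsilon> where \<epsilon>: "\<epsilon> > 0"
    and cr: "capacity_region K p 1 (\<lambda>i j. lam i j + \<epsilon>)" by blast
  from cr obtain fc where f1: "\<forall>i j. fc i j = fc j i \<and> fc i j \<ge> 0"
    and f2: "\<forall>j\<in>nodes K. (\<Sum>i\<in>nodes K - {j}. fc i j) \<le> p j"
    and f3: "\<forall>i\<in>nodes K. \<forall>j\<in>nodes K. i \<noteq> j \<longrightarrow> lam i j + \<epsilon> \<le> 1 * fc i j"
    unfolding capacity_region_def by (elim conjE exE)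
  have fsym: "\<And>i j. fc i j = fc j i" using f1 by blast
  have fsum: "\<And>j. j \<in> nodes K \<Longrightarrow> (\<Sum>i\<in>nodes K - {j}. fc i j) \<le> p j" using f2 by blast
  have flam: "\<And>i j. i \<in> nodes K \<Longrightarrow> j \<in> nodes K \<Longrightarrow> i \<noteq> j \<Longrightarrow> lam i j + \<epsilon> \<le> fc i j"
    using f3 by simp
  have finN: "finite (nodes K)" by (simp add: nodes_def)
  have Am[measurable]: "(\<lambda>\<omega>. real (A t i j \<omega>)) \<in> borel_measurable M" for t i j
    using A_meas by (rule measurable_compose) simp
  have Cm[measurable]: "(\<lambda>\<omega>. real (C t i \<omega>)) \<in> borel_measurable M" for t i
    using C_meas by (rule measurable_compose) simp
  define Arr where "Arr n t \<omega> = (\<Sum>\<tau><t. \<Sum>k\<in>nodes K - {n}. real (A \<tau> n k \<omega>))" for n t \<omega>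
  define X where "X n t \<omega> = (\<Sum>\<tau><t. real (C \<tau> n \<omega>))" for n t \<omega>
  have Arrm[measurable]: "Arr n t \<in> borel_measurable M" for n t
    unfolding Arr_def by measurable
  have Xm[measurable]: "X n t \<in> borel_measurable M" for n t
    unfolding X_def by measurable
  have node: "(\<lambda>t. measure M {\<omega>\<in>space M. \<not> Arr n t \<omega> \<le> X n t \<omega>}) \<longlonglongrightarrow> 0"
    if n: "n \<in> nodes K" and m: "m \<in> nodes K" "m \<noteq> n" for n m
  proof -
    have pn0: "0 \<le> p n" using C_mean[OF n, of 0, symmetric] by simp
    have pn1: "p n \<le> 1" using C_mean[OF n, of 0, symmetric] by simp
    define L where "L = (\<Sum>k\<in>nodes K - {n}. lam n k)"
    have "L + \<epsilon> * real (card (nodes K - {n})) = (\<Sum>k\<in>nodes K - {n}. lam n k + \<epsilon>)"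
      by (simp add: L_def sum.distrib)
    also have "\<dots> \<le> (\<Sum>k\<in>nodes K - {n}. fc k n)"
    proof (rule sum_mono)
      fix k assume k: "k \<in> nodes K - {n}"
      then have "lam n k + \<epsilon> \<le> fc n k" using flam[OF n] by auto
      then show "lam n k + \<epsilon> \<le> fc k n" using fsym[of n k] by simp
    qed
    also have "\<dots> \<le> p n" using fsum[OF n] .
    finally have L1: "L + \<epsilon> * real (card (nodes K - {n})) \<le> p n" .
    have "m \<in> nodes K - {n}" using m by auto
    then have "card (nodes K - {n}) > 0" using finN by (auto simp: card_gt_0_iff)
    then have "card (nodes K - {n}) \<ge> 1" by simp
    hence "\<epsilon> \<le> \<epsilon> * real (card (nodes K - {n}))" using \<epsilon> by simp
    with L1 have L: "L \<le> p n - \<epsilon>" by linarith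
    have aeL: "AE \<omega> in M. (\<lambda>t. Arr n t \<omega> / real t) \<longlonglongrightarrow> L"
    proof -
      have "AE \<omega> in M. \<forall>k\<in>nodes K - {n}. (\<lambda>t. (\<Sum>\<tau><t. real (A \<tau> n k \<omega>)) / real t) \<longlonglongrightarrow> lam n k"
        using finN n by (intro AE_finite_allI) (auto intro!: A_rate)
      then show ?thesis
      proof eventually_elim
        case (elim \<omega>)
        have "(\<lambda>t. \<Sum>k\<in>nodes K - {n}. (\<Sum>\<tau><t. real (A \<tau> n k \<omega>)) / real t) \<longlonglongrightarrow> L"
          unfolding L_def using elim by (intro tendsto_sum) auto
        moreover have "Arr n t \<omega> / real t = (\<Sum>k\<in>nodes K - {n}. (\<Sum>\<tau><t. real (A \<tau> n k \<omega>)) / real t)" for t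
          unfolding Arr_def by (subst sum.swap) (simp add: sum_divide_distrib)
        ultimately show ?case by simp
      qed
    qed
    define \<theta> where "\<theta> t = (p n - \<epsilon>/2) * real t" for t
    have m1: "(\<lambda>t. measure M {\<omega>\<in>space M. \<not> Arr n t \<omega> \<le> \<theta> t}) \<longlonglongrightarrow> 0"
    proof (rule ae_eventually_measure[OF P])
      show "AE \<omega> in M. eventually (\<lambda>t. Arr n t \<omega> \<le> \<theta> t) sequentially"
        using aeL
      proof eventually_elim
        case (elim \<omega>)
        have "L < p n - \<epsilon>/2" using L \<epsilon> by simp
        from order_tendstoD(2)[OF elim this] have "eventually (\<lambda>t. Arr n t \<omega> / real t < p n - \<epsilon>/2) sequentially" .
        then show ?case using eventually_gt_at_top[of 0]
          by eventually_elim (auto simp: \<theta>_def pos_divide_less_eq)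
      qed
    qed (simp add: \<theta>_def)
    have m2: "(\<lambda>t. measure M {\<omega>\<in>space M. X n t \<omega> < \<theta> t}) \<longlonglongrightarrow> 0"
    proof -
      define Y where "Y \<tau> \<omega> = real (C \<tau> n \<omega>) - p n" for \<tau> \<omega>
      have Ym[measurable]: "Y \<tau> \<in> borel_measurable M" for \<tau> unfolding Y_def by measurable
      have Cint: "integrable M (\<lambda>\<omega>. real (C \<tau> n \<omega>))" for \<tau>
        using C_01 by (intro integrable_const_bound[where B=1]) auto
      have Cexp: "integral\<^sup>L M (\<lambda>\<omega>. real (C \<tau> n \<omega>)) = p n" for \<tau>
      proof -
        have "integral\<^sup>L M (\<lambda>\<omega>. real (C \<tau> n \<omega>)) = integral\<^sup>L M (indicator {\<omega>\<in>space M. C \<tau> n \<omega> = 1})"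
        proof (rule Bochner_Integration.integral_cong[OF refl])
          fix \<omega> assume "\<omega> \<in> space M"
          then show "real (C \<tau> n \<omega>) = indicator {\<omega>\<in>space M. C \<tau> n \<omega> = 1} \<omega>"
            using C_01[of \<omega> \<tau> n] by (auto simp: indicator_def)
        qed
        also have "\<dots> = p n" using C_mean[OF n, of \<tau>] by (simp add: Int_absorb2)
        finally show ?thesis .
      qed
      have Ybnd: "\<bar>Y \<tau> \<omega>\<bar> \<le> 1" if "\<omega> \<in> space M" for \<tau> \<omega>
        using C_01[OF that, of \<tau> n] pn0 pn1 by (cases "C \<tau> n \<omega>") (auto simp: Y_def)
      have Ysq: "integral\<^sup>L M (\<lambda>\<omega>. (\<Sum>\<tau><t. Y \<tau> \<omega>)\<^sup>2) \<le> real t" for t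
      proof (rule sum_sq_bound[OF P Ym])
        show "\<bar>Y \<tau> \<omega>\<bar> \<le> 1" if "\<omega> \<in> space M" for \<tau> \<omega>
          using Ybnd[OF that] .
        show "integral\<^sup>L M (Y \<tau>) = 0" for \<tau>
          unfolding Y_def using Cint Cexp by (simp add: prob_space)
        show "indep_vars (\<lambda>_. borel) Y UNIV"
          unfolding Y_def by (rule indep_vars_compose2[OF C_iid[OF n]]) simp
      qed
      have Ysqi: "integrable M (\<lambda>\<omega>. (\<Sum>\<tau><t. Y \<tau> \<omega>)\<^sup>2)" for t
      proof (rule integrable_const_bound[where B="real t ^ 2"])
        show "AE \<omega> in M. norm ((\<Sum>\<tau><t. Y \<tau> \<omega>)\<^sup>2) \<le> real t ^ 2"
        proof (rule AE_I2)
          fix \<omega> assume w: "\<omega> \<in> space M"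
          have "\<bar>\<Sum>\<tau><t. Y \<tau> \<omega>\<bar> \<le> (\<Sum>\<tau><t. \<bar>Y \<tau> \<omega>\<bar>)" by (rule sum_abs)
          also have "\<dots> \<le> (\<Sum>\<tau><t. 1)"
            using Ybnd[OF w] by (intro sum_mono) auto
          finally have "\<bar>\<Sum>\<tau><t. Y \<tau> \<omega>\<bar> \<le> real t" by simp
          then show "norm ((\<Sum>\<tau><t. Y \<tau> \<omega>)\<^sup>2) \<le> real t ^ 2"
            using abs_le_square_iff[of "\<Sum>\<tau><t. Y \<tau> \<omega>" "real t"] by simp
        qed
      qed simp
      have bnd: "measure M {\<omega>\<in>space M. X n t \<omega> < \<theta> t} \<le> (4 / \<epsilon>\<^sup>2) / real t" if t: "t > 0" for t
      proof -
        have ep: "0 < \<epsilon> / 2 * real t" using \<epsilon> t by simp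
        have "measure M {\<omega>\<in>space M. X n t \<omega> < \<theta> t} \<le>
              measure M {\<omega>\<in>space M. (\<epsilon> / 2 * real t)\<^sup>2 \<le> (\<Sum>\<tau><t. Y \<tau> \<omega>)\<^sup>2}"
        proof (rule finite_measure_mono)
          show "{\<omega>\<in>space M. X n t \<omega> < \<theta> t} \<subseteq> {\<omega>\<in>space M. (\<epsilon> / 2 * real t)\<^sup>2 \<le> (\<Sum>\<tau><t. Y \<tau> \<omega>)\<^sup>2}"
          proof safe
            fix \<omega> assume "\<omega> \<in> space M" "X n t \<omega> < \<theta> t"
            hence "(\<Sum>\<tau><t. Y \<tau> \<omega>) < - (\<epsilon> / 2 * real t)"
              by (simp add: X_def Y_def sum_subtractf \<theta>_def algebra_simps)
            hence "\<epsilon> / 2 * real t \<le> - (\<Sum>\<tau><t. Y \<tau> \<omega>)" by simp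
            hence "(\<epsilon> / 2 * real t)\<^sup>2 \<le> (- (\<Sum>\<tau><t. Y \<tau> \<omega>))\<^sup>2"
              by (rule power_mono) (use ep in simp)
            then show "(\<epsilon> / 2 * real t)\<^sup>2 \<le> (\<Sum>\<tau><t. Y \<tau> \<omega>)\<^sup>2" by simp
          qed
        qed measurable
        also have "\<dots> \<le> integral\<^sup>L M (\<lambda>\<omega>. (\<Sum>\<tau><t. Y \<tau> \<omega>)\<^sup>2) / (\<epsilon> / 2 * real t)\<^sup>2"
          by (rule integral_Markov_inequality_measure[OF Ysqi, where A="space M"]) (use ep t in auto)
        also have "\<dots> \<le> real t / (\<epsilon> / 2 * real t)\<^sup>2"
          by (intro divide_right_mono Ysq) simp
        also have "\<dots> = (4 / \<epsilon>\<^sup>2) / real t" using t \<epsilon> by (simp add: field_simps power2_eq_square)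
        finally show ?thesis .
      qed
      show ?thesis
      proof (rule tendsto_sandwich[where f="\<lambda>_. 0" and h="\<lambda>t. (4 / \<epsilon>\<^sup>2) / real t"])
        show "eventually (\<lambda>t. measure M {\<omega>\<in>space M. X n t \<omega> < \<theta> t} \<le> (4 / \<epsilon>\<^sup>2) / real t) sequentially"
          using eventually_gt_at_top[of 0] by eventually_elim (rule bnd)
        show "(\<lambda>t. (4 / \<epsilon>\<^sup>2) / real t) \<longlonglongrightarrow> 0" by (rule lim_const_over_n)
      qed auto
    qed
    have sum0: "(\<lambda>t. measure M {\<omega>\<in>space M. \<not> Arr n t \<omega> \<le> \<theta> t} + measure M {\<omega>\<in>space M. X n t \<omega> < \<theta> t}) \<longlonglongrightarrow> 0"
      using tendsto_add[OF m1 m2] by simp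
    show ?thesis
    proof (rule tendsto_sandwich[where f="\<lambda>_. 0", OF _ _ tendsto_const sum0])
      show "eventually (\<lambda>t. 0 \<le> measure M {\<omega>\<in>space M. \<not> Arr n t \<omega> \<le> X n t \<omega>}) sequentially" by simp
      show "eventually (\<lambda>t. measure M {\<omega>\<in>space M. \<not> Arr n t \<omega> \<le> X n t \<omega>} \<le>
         measure M {\<omega>\<in>space M. \<not> Arr n t \<omega> \<le> \<theta> t} + measure M {\<omega>\<in>space M. X n t \<omega> < \<theta> t}) sequentially"
      proof (intro always_eventually allI)
        fix t
        have "measure M {\<omega>\<in>space M. \<not> Arr n t \<omega> \<le> X n t \<omega>} \<le>
            measure M ({\<omega>\<in>space M. \<not> Arr n t \<omega> \<le> \<theta> t} \<union> {\<omega>\<in>space M. X n t \<omega> < \<theta> t})"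
          by (intro finite_measure_mono) auto
        also have "\<dots> \<le> measure M {\<omega>\<in>space M. \<not> Arr n t \<omega> \<le> \<theta> t} + measure M {\<omega>\<in>space M. X n t \<omega> < \<theta> t}"
          by (intro measure_Un_le) auto
        finally show "measure M {\<omega>\<in>space M. \<not> Arr n t \<omega> \<le> X n t \<omega>} \<le>
         measure M {\<omega>\<in>space M. \<not> Arr n t \<omega> \<le> \<theta> t} + measure M {\<omega>\<in>space M. X n t \<omega> < \<theta> t}" .
      qed
    qed
  qed
  define Uo where "Uo \<tau> i j \<omega> = Uq K (\<lambda>t i j. A t i j \<omega>) (\<lambda>t i. C t i \<omega>) (\<lambda>t i j. F t i j \<omega>) \<tau> i j" for \<tau> i j \<omega>
  have good: "Uo (Suc t) i j \<omega> = A t i j \<omega>"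
    if w: "\<omega> \<in> space M" and ij: "i \<in> nodes K" "j \<in> nodes K" "i \<noteq> j"
      and gi: "Arr i t \<omega> \<le> X i t \<omega>" and gj: "Arr j t \<omega> \<le> X j t \<omega>" for t i j \<omega>
  proof -
    have hi: "(\<Sum>\<tau><t. \<Sum>k\<in>nodes K - {i}. A \<tau> i k \<omega>) \<le> (\<Sum>\<tau><t. C \<tau> i \<omega>)"
      using gi unfolding Arr_def X_def by (simp flip: of_nat_sum)
    have hj: "(\<Sum>\<tau><t. \<Sum>k\<in>nodes K - {j}. A \<tau> j k \<omega>) \<le> (\<Sum>\<tau><t. C \<tau> j \<omega>)"
      using gj unfolding Arr_def X_def by (simp flip: of_nat_sum)
    show ?thesis unfolding Uo_def
      by (rule key_det[OF F_od[OF w] A_sym ij hi hj])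
  qed
  have EA: "integral\<^sup>L M (\<lambda>\<omega>. (real (A t i j \<omega>))\<^sup>2) \<le> Amax\<^sup>2"
    if "i \<in> nodes K" "j \<in> nodes K" "i \<noteq> j" for t i j
    by (rule cond_bound[OF P hist_sub[OF A_meas C_meas] A_int A_mom[OF that]])
  show ?thesis
    unfolding switch_stable_def
  proof (intro ballI impI)
    fix i j assume i: "i \<in> nodes K" and j: "j \<in> nodes K" and ij: "i \<noteq> j"
    define h where "h t = measure M {\<omega>\<in>space M. \<not> Arr i t \<omega> \<le> X i t \<omega>} +
                          measure M {\<omega>\<in>space M. \<not> Arr j t \<omega> \<le> X j t \<omega>}" for t
    have hlim: "h \<longlonglongrightarrow> 0"
      using tendsto_add[OF node[OF i j ij[symmetric]] node[OF j i ij]] by (simp add: h_def[abs_def])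
    have h0: "0 \<le> h t" for t by (simp add: h_def)
    have h2: "h t \<le> 2" for t
      using prob_le_1[of "{\<omega>\<in>space M. \<not> Arr i t \<omega> \<le> X i t \<omega>}"]
            prob_le_1[of "{\<omega>\<in>space M. \<not> Arr j t \<omega> \<le> X j t \<omega>}"] unfolding h_def by linarith
    let ?F = "\<lambda>V::real. limsup (\<lambda>t::nat. ereal ((\<Sum>\<tau><t. measure M {\<omega>\<in>space M. real (Uo \<tau> i j \<omega>) > V}) / real t))"
    have up: "?F V \<le> ereal (Amax\<^sup>2 / V\<^sup>2)" if V: "V > 0" for V
    proof (rule avg_limsup[OF _ _ _ h0 h2 hlim])
      show "0 \<le> measure M {\<omega>\<in>space M. real (Uo \<tau> i j \<omega>) > V}" for \<tau> by simp
      show "measure M {\<omega>\<in>space M. real (Uo 0 i j \<omega>) > V} \<le> 1" by (rule prob_le_1)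
      show "0 \<le> Amax\<^sup>2 / V\<^sup>2" by simp
      fix \<tau>
      have "measure M {\<omega>\<in>space M. real (Uo (Suc \<tau>) i j \<omega>) > V} \<le>
            measure M ({\<omega>\<in>space M. V \<le> real (A \<tau> i j \<omega>)} \<union>
              ({\<omega>\<in>space M. \<not> Arr i \<tau> \<omega> \<le> X i \<tau> \<omega>} \<union> {\<omega>\<in>space M. \<not> Arr j \<tau> \<omega> \<le> X j \<tau> \<omega>}))"
      proof (rule measure_mono_any)
        show "finite_measure M" by unfold_locales
        show "{\<omega>\<in>space M. real (Uo (Suc \<tau>) i j \<omega>) > V} \<subseteq>
            {\<omega>\<in>space M. V \<le> real (A \<tau> i j \<omega>)} \<union>
              ({\<omega>\<in>space M. \<not> Arr i \<tau> \<omega> \<le> X i \<tau> \<omega>} \<union> {\<omega>\<in>space M. \<not> Arr j \<tau> \<omega> \<le> X j \<tau> \<omega>})"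
          using good[OF _ i j ij] by fastforce
      qed measurable
      also have "\<dots> \<le> measure M {\<omega>\<in>space M. V \<le> real (A \<tau> i j \<omega>)} + h \<tau>"
      proof -
        have "measure M ({\<omega>\<in>space M. V \<le> real (A \<tau> i j \<omega>)} \<union>
              ({\<omega>\<in>space M. \<not> Arr i \<tau> \<omega> \<le> X i \<tau> \<omega>} \<union> {\<omega>\<in>space M. \<not> Arr j \<tau> \<omega> \<le> X j \<tau> \<omega>}))
          \<le> measure M {\<omega>\<in>space M. V \<le> real (A \<tau> i j \<omega>)} +
             measure M ({\<omega>\<in>space M. \<not> Arr i \<tau> \<omega> \<le> X i \<tau> \<omega>} \<union> {\<omega>\<in>space M. \<not> Arr j \<tau> \<omega> \<le> X j \<tau> \<omega>})"
          by (intro measure_Un_le) measurable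
        also have "measure M ({\<omega>\<in>space M. \<not> Arr i \<tau> \<omega> \<le> X i \<tau> \<omega>} \<union> {\<omega>\<in>space M. \<not> Arr j \<tau> \<omega> \<le> X j \<tau> \<omega>}) \<le> h \<tau>"
          unfolding h_def by (intro measure_Un_le) measurable
        finally show ?thesis by simp
      qed
      also have "measure M {\<omega>\<in>space M. V \<le> real (A \<tau> i j \<omega>)} \<le> Amax\<^sup>2 / V\<^sup>2"
      proof -
        have "measure M {\<omega>\<in>space M. V \<le> real (A \<tau> i j \<omega>)} \<le> measure M {\<omega>\<in>space M. V\<^sup>2 \<le> (real (A \<tau> i j \<omega>))\<^sup>2}"
          using V by (intro finite_measure_mono) (auto intro: power_mono)
        also have "\<dots> \<le> integral\<^sup>L M (\<lambda>\<omega>. (real (A \<tau> i j \<omega>))\<^sup>2) / V\<^sup>2"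
          by (rule integral_Markov_inequality_measure[OF A_int, where A="space M"]) (use V in auto)
        also have "\<dots> \<le> Amax\<^sup>2 / V\<^sup>2"
          by (intro divide_right_mono EA[OF i j ij]) simp
        finally show ?thesis .
      qed
      finally show "measure M {\<omega>\<in>space M. real (Uo (Suc \<tau>) i j \<omega>) > V} \<le> Amax\<^sup>2 / V\<^sup>2 + h \<tau>"
        by simp
    qed
    have lo: "0 \<le> ?F V" for V
      by (intro le_Limsup always_eventually allI) (auto intro!: divide_nonneg_nonneg sum_nonneg)
    have lim: "((\<lambda>V::real. ereal (Amax\<^sup>2 / V\<^sup>2)) \<longlongrightarrow> ereal 0) at_top"
      by (intro tendsto_ereal real_tendsto_divide_at_top[OF tendsto_const]
            filterlim_pow_at_top[OF _ filterlim_ident]) simp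
    have fin: "(?F \<longlongrightarrow> 0) at_top"
    proof (rule tendsto_sandwich[OF _ _ tendsto_const lim[unfolded zero_ereal_def[symmetric]]])
      show "eventually (\<lambda>V. 0 \<le> ?F V) at_top" using lo by simp
      show "eventually (\<lambda>V. ?F V \<le> ereal (Amax\<^sup>2 / V\<^sup>2)) at_top"
        using eventually_gt_at_top[of "0::real"] by eventually_elim (rule up)
    qed
    then show "((\<lambda>V::real. limsup (\<lambda>t::nat. ereal ((\<Sum>\<tau><t. measure M {\<omega>\<in>space M.
        real (Uq K (\<lambda>t i j. A t i j \<omega>) (\<lambda>t i. C t i \<omega>) (\<lambda>t i j. F t i j \<omega>) \<tau> i j) > V}) / real t)))
          \<longlongrightarrow> 0) at_top"
      unfolding Uo_def .
  qed
qed

end
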